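(* Let $a,b\in C^0(\mathbb{R})$ be even and positive, and let $G\in C^0(\mathbb{R})$ be even with $G(s)\ge G(M)=0$ for all $s\in\mathbb{R}$ and $G(s)>0$ for $s\in[0,M)$, for some $M>0$. Let $m>0$. Then there exists a constant $C^{as}>0$ depending only on $a,b,G,M,m$ (and not on $L$) such that for every $L>0$, with $I=(-L,L)$, $$\mathcal{E}(u,I)\ge C^{as}\quad\text{for all odd } u\in H^1_m(I).$$ Moreover, one can take $$C^{as}:=\inf_{t>0}\Big\{\frac{m_0^2}{\int_0^t 1/a}+2G_0\int_0^t b\Big\},\qquad m_0:=\tfrac12\min\{m,M\},\quad G_0:=\inf_{s\in(0,m_0)}G(s).$$
   Context: $H^1_m(I):=\{u\in H^1(I):u(-L)=-m,\ u(L)=m\}$ and $\mathcal{E}(u,I):=\int_{-L}^L\{\tfrac12(u')^2a(x)+G(u)b(x)\}\,dx$. *)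

theory Defs
  imports "HOL-Analysis.Analysis"
begin

definition test_fun :: "real \<Rightarrow> (real \<Rightarrow> real) \<Rightarrow> bool" where
  "test_fun L \<phi> \<longleftrightarrow>
     (\<forall>k x. ((deriv ^^ k) \<phi>) differentiable (at x)) \<and>
     (\<exists>\<delta>>0. \<forall>x. L - \<delta> \<le> \<bar>x\<bar> \<longrightarrow> \<phi> x = 0)"

definition weak_deriv_on :: "real \<Rightarrow> (real \<Rightarrow> real) \<Rightarrow> (real \<Rightarrow> real) \<Rightarrow> bool" where
  "weak_deriv_on L u v \<longleftrightarrow>
     set_integrable lborel {-L<..<L} v \<and>
     (\<forall>\<phi>. test_fun L \<phi> \<longrightarrow>
        (LINT x:{-L<..<L}|lborel. u x * deriv \<phi> x) = - (LINT x:{-L<..<L}|lborel. v x * \<phi> x))"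

text \<open>u (taken as its continuous representative on [-L,L]) belongs to H^1(-L,L) with weak
  derivative v \<in> L^2(-L,L).\<close>
definition H1_with_deriv :: "real \<Rightarrow> (real \<Rightarrow> real) \<Rightarrow> (real \<Rightarrow> real) \<Rightarrow> bool" where
  "H1_with_deriv L u v \<longleftrightarrow>
     continuous_on {-L..L} u \<and>
     set_borel_measurable lborel {-L<..<L} u \<and>
     set_integrable lborel {-L<..<L} (\<lambda>x. (u x)\<^sup>2) \<and>
     set_borel_measurable lborel {-L<..<L} v \<and>
     set_integrable lborel {-L<..<L} (\<lambda>x. (v x)\<^sup>2) \<and>
     weak_deriv_on L u v"

definition H1m_with_deriv :: "real \<Rightarrow> real \<Rightarrow> (real \<Rightarrow> real) \<Rightarrow> (real \<Rightarrow> real) \<Rightarrow> bool" where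
  "H1m_with_deriv m L u v \<longleftrightarrow> H1_with_deriv L u v \<and> u (-L) = -m \<and> u L = m"

definition energy :: "(real \<Rightarrow> real) \<Rightarrow> (real \<Rightarrow> real) \<Rightarrow> (real \<Rightarrow> real) \<Rightarrow> real
    \<Rightarrow> (real \<Rightarrow> real) \<Rightarrow> (real \<Rightarrow> real) \<Rightarrow> real" where
  "energy a b G L u v = (LINT x:{-L..L}|lborel. (1/2) * (v x)\<^sup>2 * a x + G (u x) * b x)"

definition C_as :: "(real \<Rightarrow> real) \<Rightarrow> (real \<Rightarrow> real) \<Rightarrow> (real \<Rightarrow> real) \<Rightarrow> real \<Rightarrow> real \<Rightarrow> real" where
  "C_as a b G M m =
    (let m0 = (1/2) * min m M;
         G0 = Inf (G ` {0<..<m0})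
     in Inf ((\<lambda>t. m0\<^sup>2 / integral {0..t} (\<lambda>x. 1 / a x) + 2 * G0 * integral {0..t} b) ` {0<..}))"

end

theory Submission
  imports Defs "HOL-Computational_Algebra.Polynomial"
begin

definition smooth :: "(real \<Rightarrow> real) \<Rightarrow> bool" where
  "smooth h \<longleftrightarrow> (\<forall>k x. ((deriv ^^ k) h) differentiable (at x))"

lemma smooth_coinduct:
  assumes step: "\<And>h. P h \<Longrightarrow> (\<forall>x. h differentiable (at x)) \<and> P (deriv h)"
    and "P h"
  shows "smooth h"
proof -
  have "\<forall>h. P h \<longrightarrow> P ((deriv ^^ k) h)" for k
  proof (induction k)
    case 0 then show ?case by simp
  next
    case (Suc k)
    show ?case
    proof (intro allI impI)
      fix h assume "P h"
      then have "P (deriv h)" using step by blast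
      then have "P ((deriv ^^ k) (deriv h))" using Suc by blast
      then show "P ((deriv ^^ Suc k) h)" by (simp add: funpow_Suc_right del: funpow.simps)
    qed
  qed
  then show ?thesis unfolding smooth_def using step assms(2) by blast
qed

lemma smooth_differentiable: "smooth h \<Longrightarrow> h differentiable (at x)"
  unfolding smooth_def by (metis funpow_0)

lemma smooth_deriv: "smooth h \<Longrightarrow> smooth (deriv h)"
  unfolding smooth_def
  by (metis comp_apply funpow_Suc_right)

lemma smooth_from_deriv:
  assumes "\<And>x. h differentiable (at x)" "smooth (deriv h)"
  shows "smooth h"
  unfolding smooth_def
proof (intro allI)
  fix k x show "(deriv ^^ k) h differentiable at x"
    using assms by (cases k) (auto simp: smooth_def funpow_Suc_right simp del: funpow.simps)
qed

lemma smooth_const: "smooth (\<lambda>x. c)"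
  by (rule smooth_coinduct[where P="\<lambda>h. \<exists>c. h = (\<lambda>x. c)"]) auto

lemma smooth_affine:
  assumes "smooth f"
  shows "smooth (\<lambda>x. f (c * x + d))"
proof (rule smooth_coinduct[where P="\<lambda>h. \<exists>f e. smooth f \<and> h = (\<lambda>x. e * f (c * x + d))"])
  fix h assume "\<exists>f e. smooth f \<and> h = (\<lambda>x. e * f (c * x + d))"
  then obtain f e where f: "smooth f" and h: "h = (\<lambda>x. e * f (c * x + d))" by blast
  have D: "(h has_real_derivative (e * c * deriv f (c * x + d))) (at x)" for x
  proof -
    have "(f has_real_derivative deriv f (c * x + d)) (at (c * x + d))"
      using smooth_differentiable[OF f] by (simp add: DERIV_deriv_iff_real_differentiable)
    then have "((\<lambda>x. f (c * x + d)) has_real_derivative deriv f (c * x + d) * c) (at x)"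
      by (rule DERIV_chain2) (auto intro!: derivative_eq_intros)
    then show ?thesis unfolding h by (auto intro!: derivative_eq_intros simp: algebra_simps)
  qed
  have "deriv h = (\<lambda>x. (e * c) * deriv f (c * x + d))"
    using D by (intro ext DERIV_imp_deriv)
  then show "(\<forall>x. h differentiable at x) \<and> (\<exists>f e. smooth f \<and> deriv h = (\<lambda>x. e * f (c * x + d)))"
    using D smooth_deriv[OF f] real_differentiable_def by blast
qed (use assms in \<open>auto intro!: exI[of _ f] exI[of _ 1]\<close>)

definition sp :: "((real \<Rightarrow> real) \<times> (real \<Rightarrow> real)) list \<Rightarrow> real \<Rightarrow> real" where
  "sp xs = (\<lambda>x. sum_list (map (\<lambda>(f,g). f x * g x) xs))"

definition dl :: "((real \<Rightarrow> real) \<times> (real \<Rightarrow> real)) list \<Rightarrow> ((real \<Rightarrow> real) \<times> (real \<Rightarrow> real)) list" where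
  "dl xs = concat (map (\<lambda>(f,g). [(deriv f, g), (f, deriv g)]) xs)"

lemma sp_deriv:
  assumes "\<forall>(f,g)\<in>set xs. smooth f \<and> smooth g"
  shows "(sp xs has_real_derivative sp (dl xs) x) (at x)"
  using assms
proof (induction xs)
  case Nil then show ?case by (simp add: sp_def dl_def)
next
  case (Cons p xs)
  obtain f g where p: "p = (f,g)" by fastforce
  have f: "(f has_real_derivative deriv f x) (at x)" and g: "(g has_real_derivative deriv g x) (at x)"
    using Cons.prems p smooth_differentiable by (auto simp: DERIV_deriv_iff_real_differentiable)
  have "((\<lambda>x. f x * g x + sp xs x) has_real_derivative (deriv f x * g x + f x * deriv g x + sp (dl xs) x)) (at x)"
    using Cons by (auto intro!: derivative_eq_intros f g)
  then show ?case by (simp add: p sp_def dl_def algebra_simps)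
qed

lemma smooth_sp:
  assumes "\<forall>(f,g)\<in>set xs. smooth f \<and> smooth g"
  shows "smooth (sp xs)"
proof (rule smooth_coinduct[where P="\<lambda>h. \<exists>xs. (\<forall>(f,g)\<in>set xs. smooth f \<and> smooth g) \<and> h = sp xs"])
  fix h assume "\<exists>xs. (\<forall>(f,g)\<in>set xs. smooth f \<and> smooth g) \<and> h = sp xs"
  then obtain xs where xs: "\<forall>(f,g)\<in>set xs. smooth f \<and> smooth g" and h: "h = sp xs" by blast
  have "deriv h = sp (dl xs)" using sp_deriv[OF xs] DERIV_imp_deriv h by blast
  moreover have "\<forall>(f,g)\<in>set (dl xs). smooth f \<and> smooth g"
    using xs by (auto simp: dl_def smooth_deriv)
  ultimately show "(\<forall>x. h differentiable at x) \<and> (\<exists>xs. (\<forall>(f,g)\<in>set xs. smooth f \<and> smooth g) \<and> deriv h = sp xs)"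
    using sp_deriv[OF xs] h real_differentiable_def by blast
qed (use assms in auto)

lemma smooth_mult: "smooth f \<Longrightarrow> smooth g \<Longrightarrow> smooth (\<lambda>x. f x * g x)"
  using smooth_sp[of "[(f,g)]"] by (simp add: sp_def)

lemma smooth_diff: "smooth f \<Longrightarrow> smooth g \<Longrightarrow> smooth (\<lambda>x. f x - g x)"
  using smooth_sp[of "[(f,\<lambda>x. 1), (g, \<lambda>x. -1)]"] smooth_const by (simp add: sp_def)

lemma smooth_cmult: "smooth f \<Longrightarrow> smooth (\<lambda>x. c * f x)"
  using smooth_mult[OF smooth_const] by blast


lemma poly_exp_lim_top: "((\<lambda>y. poly q y / exp y) \<longlongrightarrow> (0::real)) at_top"
proof -
  have "((\<lambda>y. \<Sum>i\<le>degree q. coeff q i * (y ^ i / exp y)) \<longlongrightarrow> (\<Sum>i\<le>degree q. coeff q i * 0)) at_top"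
    by (intro tendsto_intros tendsto_power_div_exp_0)
  then show ?thesis by (simp add: poly_altdef sum_divide_distrib)
qed

lemma poly_exp_lim_right: "((\<lambda>x. poly q (1/x) * exp (-1/x)) \<longlongrightarrow> (0::real)) (at_right 0)"
proof -
  have "((\<lambda>x. poly q (inverse x) / exp (inverse x)) \<longlongrightarrow> (0::real)) (at_right 0)"
    using filterlim_compose[OF poly_exp_lim_top filterlim_inverse_at_top_right] by (simp add: o_def)
  moreover have "poly q (inverse x) / exp (inverse x) = poly q (1/x) * exp (-1/x)" for x :: real
  proof -
    have "exp (-1/x) = inverse (exp (1/x))" by (metis exp_minus minus_divide_left)
    then show ?thesis by (simp add: inverse_eq_divide)
  qed
  ultimately show ?thesis by simp
qed

definition gp :: "real poly \<Rightarrow> real \<Rightarrow> real" where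
  "gp p x = (if x > 0 then poly p (1/x) * exp (-1/x) else 0)"

definition nxt :: "real poly \<Rightarrow> real poly" where
  "nxt p = [:0,0,1:] * (p - pderiv p)"

lemma gp_deriv: "(gp p has_real_derivative gp (nxt p) x) (at x)"
proof -
  consider "x > 0" | "x < 0" | "x = 0" by linarith
  then show ?thesis
  proof cases
    case 1
    have "((\<lambda>x. poly p (1/x) * exp (-1/x)) has_real_derivative
        (poly (pderiv p) (1/x) * (- ((1/x)^2)) * exp (-1/x) + poly p (1/x) * (exp (-1/x) * ((1/x)^2)))) (at x)"
    proof -
      have d1: "((\<lambda>x. 1/x) has_real_derivative (- ((1/x)^2))) (at x)"
        using 1 by (auto intro!: derivative_eq_intros simp: power2_eq_square field_simps)
      have d2: "((\<lambda>x. poly p (1/x)) has_real_derivative poly (pderiv p) (1/x) * (- ((1/x)^2))) (at x)"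
        by (rule DERIV_chain2[OF poly_DERIV d1])
      have d3: "((\<lambda>x. exp (-1/x)) has_real_derivative exp (-1/x) * ((1/x)^2)) (at x)"
        using 1 by (auto intro!: derivative_eq_intros simp: power2_eq_square field_simps)
      show ?thesis using DERIV_mult[OF d2 d3] by (simp add: mult_ac)
    qed
    moreover have "poly (pderiv p) (1/x) * (- ((1/x)^2)) * exp (-1/x) + poly p (1/x) * (exp (-1/x) * ((1/x)^2))
        = gp (nxt p) x"
      using 1 by (simp add: gp_def nxt_def power2_eq_square algebra_simps)
    ultimately have "((\<lambda>x. poly p (1/x) * exp (-1/x)) has_real_derivative gp (nxt p) x) (at x)" by simp
    then show ?thesis
      by (rule has_field_derivative_transform_within_open[where S="{0<..}"]) (use 1 in \<open>auto simp: gp_def\<close>)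
  next
    case 2
    have "((\<lambda>x. 0) has_real_derivative 0) (at x)" by simp
    then have "(gp p has_real_derivative 0) (at x)"
      by (rule has_field_derivative_transform_within_open[where S="{..<0}"]) (use 2 in \<open>auto simp: gp_def\<close>)
    then show ?thesis using 2 by (simp add: gp_def)
  next
    case 3
    have L: "((\<lambda>y. gp p y / y) \<longlongrightarrow> 0) (at_left 0)"
    proof -
      have "eventually (\<lambda>y. gp p y / y = 0) (at_left (0::real))"
        using eventually_at_left_real[of "-1" 0] by (auto elim!: eventually_mono simp: gp_def)
      then show ?thesis by (rule tendsto_eventually)
    qed
    have R: "((\<lambda>y. gp p y / y) \<longlongrightarrow> 0) (at_right 0)"
    proof -
      have "eventually (\<lambda>y. poly (p * [:0,1:]) (1/y) * exp (-1/y) = gp p y / y) (at_right (0::real))"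
        using eventually_at_right_real[of 0 1] by (auto elim!: eventually_mono simp: gp_def field_simps)
      then show ?thesis by (rule Lim_transform_eventually[OF poly_exp_lim_right])
    qed
    have "((\<lambda>y. (gp p y - gp p 0) / (y - 0)) \<longlongrightarrow> 0) (at 0)"
      using filterlim_split_at[OF L R] by (simp add: gp_def)
    then show ?thesis using 3 by (simp add: has_field_derivative_iff gp_def)
  qed
qed

lemma smooth_gp: "smooth (gp p)"
proof (rule smooth_coinduct[where P="\<lambda>h. \<exists>p. h = gp p"])
  fix h assume "\<exists>p. h = gp p"
  then obtain p where h: "h = gp p" by blast
  have "deriv h = gp (nxt p)" unfolding h by (intro ext DERIV_imp_deriv gp_deriv)
  then show "(\<forall>x. h differentiable at x) \<and> (\<exists>p. deriv h = gp p)"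
    using gp_deriv h real_differentiable_def by blast
qed auto

lemma gp_nonneg: "gp 1 x \<ge> 0" by (simp add: gp_def)
lemma gp_pos: "x > 0 \<Longrightarrow> gp 1 x > 0" by (simp add: gp_def)
lemma gp_zero: "x \<le> 0 \<Longrightarrow> gp 1 x = 0" by (simp add: gp_def)


definition eta :: "real \<Rightarrow> real" where
  "eta s = gp 1 s * gp 1 (1 - s)"

lemma smooth_eta: "smooth eta"
proof -
  have "smooth (\<lambda>s. gp 1 ((-1) * s + 1))" by (intro smooth_affine smooth_gp)
  then have "smooth (\<lambda>s. gp 1 (1 - s))" by simp
  then show ?thesis unfolding eta_def[abs_def] by (intro smooth_mult smooth_gp)
qed

lemma eta_nonneg: "eta s \<ge> 0"
  unfolding eta_def by (simp add: gp_nonneg)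

lemma eta_zero: "s \<le> 0 \<or> s \<ge> 1 \<Longrightarrow> eta s = 0"
  unfolding eta_def using gp_zero[of s] gp_zero[of "1 - s"] by auto

lemma eta_cont: "continuous_on S eta"
  using smooth_differentiable[OF smooth_eta]
  by (meson continuous_at_imp_continuous_on differentiable_imp_continuous_within)

lemma eta_half: "eta (1/2) > 0"
  unfolding eta_def by (intro mult_pos_pos gp_pos) auto

definition Zc :: real where "Zc = integral {-1..1} eta"

lemma Zc_pos: "Zc > 0"
proof -
  have int: "eta integrable_on {-1..1}"
    using eta_cont integrable_continuous_real by blast
  have ge: "Zc \<ge> 0" unfolding Zc_def using int eta_nonneg by (simp add: integral_nonneg)
  have "Zc \<noteq> 0"
  proof
    assume "Zc = 0"
    then have "(eta has_integral 0) (cbox (-1) 1)" using int unfolding Zc_def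
      by (metis box_real(2) has_integral_integral)
    then have "eta (1/2) = 0"
      by (intro has_integral_0_cbox_imp_0[where a="-1" and b=1]) (auto simp: eta_cont eta_nonneg)
    then show False using eta_half by simp
  qed
  with ge show ?thesis by simp
qed

definition Hs :: "real \<Rightarrow> real" where "Hs t = integral {-1..t} eta / Zc"

lemma eta_int: "eta integrable_on {a..b}"
  using eta_cont integrable_continuous_real by blast

lemma integral_eta_neg: "t \<le> 0 \<Longrightarrow> integral {-1..t} eta = 0"
proof -
  assume t: "t \<le> 0"
  have "integral {-1..t} eta = integral {-1..t} (\<lambda>_. 0::real)"
    by (rule integral_cong) (use t eta_zero in auto)
  then show ?thesis by simp
qed

lemma Hs_zero: "t \<le> 0 \<Longrightarrow> Hs t = 0"
  by (simp add: Hs_def integral_eta_neg)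

lemma Hs_one: "t \<ge> 1 \<Longrightarrow> Hs t = 1"
proof -
  assume t: "t \<ge> 1"
  have "integral {-1..1} eta + integral {1..t} eta = integral {-1..t} eta"
    by (rule Henstock_Kurzweil_Integration.integral_combine) (use t eta_int in auto)
  moreover have "integral {1..t} eta = integral {1..t} (\<lambda>_. 0::real)"
    by (rule integral_cong) (use t eta_zero in auto)
  ultimately show ?thesis using Zc_pos by (simp add: Hs_def Zc_def)
qed

lemma Hs_mono: "t \<le> t' \<Longrightarrow> Hs t \<le> Hs t'"
proof -
  assume "t \<le> t'"
  then have "integral {-1..t} eta \<le> integral {-1..t'} eta"
    by (intro integral_subset_le) (auto simp: eta_int eta_nonneg)
  then show ?thesis using Zc_pos by (simp add: Hs_def divide_right_mono)
qed

lemma Hs_nonneg: "Hs t \<ge> 0"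
  using Hs_mono[of 0 t] Hs_mono[of t 0] Hs_zero[of 0] Hs_zero[of t] by (cases "t \<le> 0") auto

lemma Hs_le1: "Hs t \<le> 1"
  using Hs_mono[of t 1] Hs_one[of 1] Hs_one[of t] by (cases "t \<le> 1") auto

lemma Hs_deriv: "(Hs has_real_derivative eta t / Zc) (at t)"
proof (cases "t > -1")
  case True
  have "((\<lambda>u. integral {-1..u} eta) has_vector_derivative eta t) (at t within {-1..t+1})"
    by (rule integral_has_vector_derivative) (use True eta_cont in auto)
  moreover have "at t within {-1..t+1} = at t"
    by (rule at_within_interior) (use True in auto)
  ultimately have "((\<lambda>u. integral {-1..u} eta) has_real_derivative eta t) (at t)"
    by (simp add: has_real_derivative_iff_has_vector_derivative)
  then show ?thesis unfolding Hs_def[abs_def] by (rule DERIV_cdivide)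
next
  case False
  have "((\<lambda>x. 0) has_real_derivative 0) (at t)" by simp
  then have "(Hs has_real_derivative 0) (at t)"
    by (rule has_field_derivative_transform_within_open[where S="{..<0}"]) (use False Hs_zero in auto)
  then show ?thesis using False eta_zero[of t] by simp
qed

lemma deriv_Hs: "deriv Hs = (\<lambda>t. eta t / Zc)"
  by (intro ext DERIV_imp_deriv Hs_deriv)

lemma smooth_Hs: "smooth Hs"
proof (rule smooth_from_deriv)
  show "Hs differentiable at x" for x using Hs_deriv real_differentiable_def by blast
  have "smooth (\<lambda>t. (1/Zc) * eta t)" by (intro smooth_cmult smooth_eta)
  then show "smooth (deriv Hs)" by (simp add: deriv_Hs)
qed


definition phi :: "real \<Rightarrow> real \<Rightarrow> real \<Rightarrow> real \<Rightarrow> real" where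
  "phi x y e t = Hs ((t - x) / e) - Hs ((t - y) / e)"

definition kern :: "real \<Rightarrow> real \<Rightarrow> real \<Rightarrow> real" where
  "kern e z t = eta ((t - z) / e) / (e * Zc)"

lemma Hs_affine_deriv:
  assumes "e > 0"
  shows "((\<lambda>t. Hs ((t - z) / e)) has_real_derivative kern e z t) (at t)"
proof -
  have "((\<lambda>t. (t - z) / e) has_real_derivative 1 / e) (at t)"
    using assms by (auto intro!: derivative_eq_intros)
  from DERIV_chain2[OF Hs_deriv this] show ?thesis
    using assms by (simp add: kern_def mult.commute)
qed

lemma phi_deriv:
  assumes "e > 0"
  shows "(phi x y e has_real_derivative (kern e x t - kern e y t)) (at t)"
  unfolding phi_def[abs_def] using Hs_affine_deriv[OF assms] by (intro DERIV_diff) auto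

lemma deriv_phi: "e > 0 \<Longrightarrow> deriv (phi x y e) t = kern e x t - kern e y t"
  by (intro DERIV_imp_deriv phi_deriv)

lemma smooth_phi:
  assumes "e > 0" shows "smooth (phi x y e)"
proof -
  have "smooth (\<lambda>t. Hs ((1/e) * t + (- x / e)) - Hs ((1/e) * t + (- y / e)))"
    by (intro smooth_diff smooth_affine smooth_Hs)
  moreover have "(\<lambda>t. Hs ((1/e) * t + (- x / e)) - Hs ((1/e) * t + (- y / e))) = phi x y e"
    unfolding phi_def[abs_def] by (intro ext) (simp add: diff_divide_distrib)
  ultimately show ?thesis by simp
qed

lemma phi_test:
  assumes "e > 0" "-L < x" "x < y" "y + e < L"
  shows "test_fun L (phi x y e)"
  unfolding test_fun_def
proof (intro conjI)
  show "\<forall>k x'. (deriv ^^ k) (phi x y e) differentiable at x'"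
    using smooth_phi[OF assms(1)] unfolding smooth_def by blast
  show "\<exists>\<delta>>0. \<forall>t. L - \<delta> \<le> \<bar>t\<bar> \<longrightarrow> phi x y e t = 0"
  proof (intro exI[of _ "min (x + L) (L - y - e)"] conjI allI impI)
    show "0 < min (x + L) (L - y - e)" using assms by auto
    fix t assume t: "L - min (x + L) (L - y - e) \<le> \<bar>t\<bar>"
    then consider "t \<ge> y + e" | "t \<le> x" by (cases "t \<ge> 0") auto
    then show "phi x y e t = 0"
    proof cases
      case 1
      then have "(t - x) / e \<ge> 1" "(t - y) / e \<ge> 1" using assms by (auto simp: field_simps)
      then show ?thesis by (simp add: phi_def Hs_one)
    next
      case 2
      then have "(t - x) / e \<le> 0" "(t - y) / e \<le> 0" using assms by (auto simp: field_simps)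
      then show ?thesis by (simp add: phi_def Hs_zero)
    qed
  qed
qed

lemma phi_bounds:
  assumes "e > 0" "x \<le> y"
  shows "0 \<le> phi x y e t" "phi x y e t \<le> 1"
proof -
  have "(t - y) / e \<le> (t - x) / e" using assms by (simp add: divide_right_mono)
  then show "0 \<le> phi x y e t" using Hs_mono by (simp add: phi_def)
  show "phi x y e t \<le> 1" using Hs_le1[of "(t - x) / e"] Hs_nonneg[of "(t - y) / e"] by (simp add: phi_def)
qed

lemma phi_cont: "e > 0 \<Longrightarrow> continuous_on S (phi x y e)"
proof -
  assume e: "e > 0"
  have "isCont (phi x y e) t" for t using phi_deriv[OF e] by (rule DERIV_isCont)
  then show ?thesis by (simp add: continuous_at_imp_continuous_on)
qed

lemma kern_cont: "e > 0 \<Longrightarrow> continuous_on S (kern e z)"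
proof -
  assume e: "e > 0"
  have "continuous_on S (\<lambda>t. eta ((t - z) / e) / (e * Zc))"
    by (intro continuous_intros continuous_on_compose2[OF eta_cont[of UNIV]]) (use e Zc_pos in auto)
  then show ?thesis by (simp add: kern_def[abs_def])
qed

lemma kern_nonneg: "e > 0 \<Longrightarrow> kern e z t \<ge> 0"
  using Zc_pos eta_nonneg by (simp add: kern_def)

lemma kern_zero: "e > 0 \<Longrightarrow> t \<le> z \<or> t \<ge> z + e \<Longrightarrow> kern e z t = 0"
proof -
  assume e: "e > 0" and t: "t \<le> z \<or> t \<ge> z + e"
  then have "(t - z) / e \<le> 0 \<or> (t - z) / e \<ge> 1" by (auto simp: field_simps)
  then show ?thesis by (simp add: kern_def eta_zero)
qed

lemma kern_integral:
  assumes e: "e > 0" and z: "-L \<le> z" "z + e \<le> L"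
  shows "integral {-L..L} (kern e z) = 1"
proof -
  have "(kern e z has_integral (Hs ((L - z) / e) - Hs ((-L - z) / e))) {-L..L}"
  proof (rule fundamental_theorem_of_calculus)
    show "-L \<le> L" using z e by simp
    fix t
    have "((\<lambda>t. Hs ((t - z) / e)) has_vector_derivative kern e z t) (at t)"
      using Hs_affine_deriv[OF e] by (simp add: has_real_derivative_iff_has_vector_derivative)
    then show "((\<lambda>t. Hs ((t - z) / e)) has_vector_derivative kern e z t) (at t within {-L..L})"
      by (rule has_vector_derivative_at_within)
  qed
  moreover have "Hs ((L - z) / e) = 1" using z e by (intro Hs_one) (simp add: field_simps)
  moreover have "Hs ((-L - z) / e) = 0" using z e by (intro Hs_zero) (simp add: field_simps)
  ultimately show ?thesis by (simp add: integral_unique)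
qed


lemma moll_lim:
  fixes u :: "real \<Rightarrow> real"
  assumes cu: "continuous_on {-L..L} u" and z: "-L \<le> z"
    and epos: "\<And>n. e n > 0" and ez: "\<And>n. z + e n \<le> L" and lim: "e \<longlonglongrightarrow> 0"
  shows "(\<lambda>n. integral {-L..L} (\<lambda>t. u t * kern (e n) z t)) \<longlonglongrightarrow> u z"
proof (rule tendstoI)
  fix \<epsilon> :: real assume \<epsilon>: "\<epsilon> > 0"
  have zin: "z \<in> {-L..L}" using z ez[of 0] epos[of 0] by auto
  then obtain d where d: "d > 0" and dd: "\<And>t. t \<in> {-L..L} \<Longrightarrow> dist t z < d \<Longrightarrow> dist (u t) (u z) < \<epsilon>/2"
    using cu \<epsilon> unfolding continuous_on_iff by (metis half_gt_zero)
  have ev: "eventually (\<lambda>n. e n < d) sequentially"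
    using order_tendstoD(2)[OF lim d] .
  show "eventually (\<lambda>n. dist (integral {-L..L} (\<lambda>t. u t * kern (e n) z t)) (u z) < \<epsilon>) sequentially"
    using ev
  proof (rule eventually_mono)
    fix n assume en: "e n < d"
    define k where "k = kern (e n) z"
    have kc: "continuous_on {-L..L} k" unfolding k_def using kern_cont epos by blast
    have k1: "integral {-L..L} k = 1" unfolding k_def using kern_integral epos z ez by blast
    have iuk: "(\<lambda>t. u t * k t) integrable_on {-L..L}"
      by (intro integrable_continuous_real continuous_intros cu kc)
    have ik: "k integrable_on {-L..L}" by (intro integrable_continuous_real kc)
    have iuk2: "(\<lambda>t. u z * k t) integrable_on {-L..L}" by (intro integrable_continuous_real continuous_intros kc)
    have eq: "integral {-L..L} (\<lambda>t. (u t - u z) * k t) = integral {-L..L} (\<lambda>t. u t * k t) - u z"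
    proof -
      have "integral {-L..L} (\<lambda>t. (u t - u z) * k t) = integral {-L..L} (\<lambda>t. u t * k t - u z * k t)"
        by (simp add: algebra_simps)
      also have "\<dots> = integral {-L..L} (\<lambda>t. u t * k t) - integral {-L..L} (\<lambda>t. u z * k t)"
        by (rule integral_diff[OF iuk iuk2])
      also have "integral {-L..L} (\<lambda>t. u z * k t) = u z" using k1 by simp
      finally show ?thesis .
    qed
    have "norm (integral {-L..L} (\<lambda>t. (u t - u z) * k t)) \<le> integral {-L..L} (\<lambda>t. (\<epsilon>/2) * k t)"
    proof (rule integral_norm_bound_integral)
      show "(\<lambda>t. (u t - u z) * k t) integrable_on {-L..L}"
        by (intro integrable_continuous_real continuous_intros cu kc)
      show "(\<lambda>t. (\<epsilon>/2) * k t) integrable_on {-L..L}" by (intro integrable_continuous_real continuous_intros kc)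
      fix t assume t: "t \<in> {-L..L}"
      have kn: "k t \<ge> 0" unfolding k_def using kern_nonneg epos by blast
      show "norm ((u t - u z) * k t) \<le> (\<epsilon>/2) * k t"
      proof (cases "k t = 0")
        case True then show ?thesis by simp
      next
        case False
        then have "z < t" "t < z + e n" unfolding k_def using kern_zero[OF epos, of t z n] by force+
        then have "dist t z < d" using en by (simp add: dist_real_def)
        then have "\<bar>u t - u z\<bar> < \<epsilon>/2" using dd[OF t] by (simp add: dist_real_def)
        then have "\<bar>u t - u z\<bar> * k t \<le> (\<epsilon>/2) * k t" using kn by (intro mult_right_mono) auto
        then show ?thesis using kn by (simp add: abs_mult)
      qed
    qed
    also have "\<dots> = \<epsilon>/2" using k1 by simp
    finally show "dist (integral {-L..L} (\<lambda>t. u t * kern (e n) z t)) (u z) < \<epsilon>"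
      using eq \<epsilon> unfolding k_def by (simp add: dist_real_def)
  qed
qed


lemma lint_cont:
  fixes f :: "real \<Rightarrow> real"
  assumes "continuous_on {-L..L} f"
  shows "(LINT t:{-L<..<L}|lborel. f t) = integral {-L..L} f"
proof -
  have "set_integrable lborel {-L..L} f"
    unfolding set_integrable_def using borel_integrable_compact[OF compact_Icc assms] .
  then have "set_integrable lborel {-L<..<L} f"
    by (rule set_integrable_subset) auto
  then have "(LINT t:{-L<..<L}|lborel. f t) = integral {-L<..<L} f"
    by (rule set_borel_integral_eq_integral)
  then show ?thesis by (simp add: integral_open_interval_real)
qed

lemma phi_lim:
  assumes lim: "e \<longlonglongrightarrow> 0" and epos: "\<And>n. e n > 0" and xy: "x < y"
  shows "(\<lambda>n. phi x y (e n) t) \<longlonglongrightarrow> indicator {x<..y} t"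
proof -
  consider "t \<le> x" | "x < t" "t \<le> y" | "y < t" by linarith
  then show ?thesis
  proof cases
    case 1
    have "phi x y (e n) t = indicator {x<..y} t" for n
    proof -
      have "(t - x) / e n \<le> 0" "(t - y) / e n \<le> 0" using 1 xy epos[of n] by (auto simp: divide_le_0_iff)
      then show ?thesis using 1 by (simp add: phi_def Hs_zero)
    qed
    then show ?thesis by simp
  next
    case 2
    have "eventually (\<lambda>n. e n < t - x) sequentially" using order_tendstoD(2)[OF lim] 2 by simp
    then have "eventually (\<lambda>n. phi x y (e n) t = indicator {x<..y} t) sequentially"
    proof (rule eventually_mono)
      fix n assume en: "e n < t - x"
      have "(t - x) / e n \<ge> 1" using en epos[of n] by (simp add: field_simps)
      moreover have "(t - y) / e n \<le> 0" using 2 epos[of n] by (simp add: divide_le_0_iff)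
      ultimately show "phi x y (e n) t = indicator {x<..y} t" using 2 by (simp add: phi_def Hs_zero Hs_one)
    qed
    then show ?thesis by (rule tendsto_eventually)
  next
    case 3
    have "eventually (\<lambda>n. e n < t - y) sequentially" using order_tendstoD(2)[OF lim] 3 by simp
    then have "eventually (\<lambda>n. phi x y (e n) t = indicator {x<..y} t) sequentially"
    proof (rule eventually_mono)
      fix n assume en: "e n < t - y"
      have "(t - x) / e n \<ge> 1" using en epos[of n] xy by (simp add: field_simps)
      moreover have "(t - y) / e n \<ge> 1" using en epos[of n] by (simp add: field_simps)
      ultimately show "phi x y (e n) t = indicator {x<..y} t" using 3 by (simp add: phi_def Hs_one)
    qed
    then show ?thesis by (rule tendsto_eventually)
  qed
qed

lemma dom_lim:
  fixes v :: "real \<Rightarrow> real"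
  assumes v: "set_integrable lborel {-L<..<L} v"
    and lim: "e \<longlonglongrightarrow> 0" and epos: "\<And>n. e n > 0" and xy: "x < y"
  shows "(\<lambda>n. LINT t:{-L<..<L}|lborel. v t * phi x y (e n) t)
          \<longlonglongrightarrow> (LINT t:{-L<..<L}|lborel. v t * indicator {x<..y} t)"
  unfolding set_lebesgue_integral_def
proof (rule integral_dominated_convergence[where w="\<lambda>t. norm (indicator {-L<..<L} t *\<^sub>R v t)"])
  have vi: "integrable lborel (\<lambda>t. indicator {-L<..<L} t *\<^sub>R v t)" using v by (simp add: set_integrable_def)
  then have vm: "(\<lambda>t. indicator {-L<..<L} t *\<^sub>R v t) \<in> borel_measurable lborel" by auto
  show "integrable lborel (\<lambda>t. norm (indicator {-L<..<L} t *\<^sub>R v t))" using vi by auto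
  have eq1: "(\<lambda>t. indicator {-L<..<L} t *\<^sub>R (v t * indicator {x<..y} t)) =
      (\<lambda>t. (indicator {-L<..<L} t *\<^sub>R v t) * indicator {x<..y} t)" by auto
  show "(\<lambda>t. indicator {-L<..<L} t *\<^sub>R (v t * indicator {x<..y} t)) \<in> borel_measurable lborel"
    unfolding eq1 using vm by measurable
  fix i
  have pm: "phi x y (e i) \<in> borel_measurable lborel"
    using borel_measurable_continuous_onI[OF phi_cont[OF epos[of i]]] by simp
  have eq2: "(\<lambda>t. indicator {-L<..<L} t *\<^sub>R (v t * phi x y (e i) t)) =
      (\<lambda>t. (indicator {-L<..<L} t *\<^sub>R v t) * phi x y (e i) t)" by auto
  show "(\<lambda>t. indicator {-L<..<L} t *\<^sub>R (v t * phi x y (e i) t)) \<in> borel_measurable lborel"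
    unfolding eq2 using vm pm by measurable
  show "AE t in lborel. norm (indicator {-L<..<L} t *\<^sub>R (v t * phi x y (e i) t)) \<le> norm (indicator {-L<..<L} t *\<^sub>R v t)"
  proof (rule AE_I2)
    fix t
    have "0 \<le> phi x y (e i) t" "phi x y (e i) t \<le> 1" using phi_bounds[OF epos] xy by auto
    then show "norm (indicator {-L<..<L} t *\<^sub>R (v t * phi x y (e i) t)) \<le> norm (indicator {-L<..<L} t *\<^sub>R v t)"
      by (auto simp: abs_mult indicator_def intro: mult_left_le)
  qed
next
  show "AE t in lborel. (\<lambda>i. indicator {-L<..<L} t *\<^sub>R (v t * phi x y (e i) t)) \<longlonglongrightarrow>
      indicator {-L<..<L} t *\<^sub>R (v t * indicator {x<..y} t)"
    by (rule AE_I2) (intro tendsto_intros phi_lim[OF lim epos xy])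
qed


lemma weak_ftc:
  fixes u v :: "real \<Rightarrow> real"
  assumes cu: "continuous_on {-L..L} u" and wd: "weak_deriv_on L u v"
    and x: "-L < x" and xy: "x < y" and y: "y < L"
  shows "v integrable_on {x..y}" "u y - u x = integral {x..y} v"
proof -
  have vint: "set_integrable lborel {-L<..<L} v" using wd by (simp add: weak_deriv_on_def)
  have vxy: "set_integrable lborel {x..y} v" by (rule set_integrable_subset[OF vint]) (use x y in auto)
  show "v integrable_on {x..y}" using set_borel_integral_eq_integral(1)[OF vxy] .
  define e where "e n = ((L - y) / 2) / real (Suc n)" for n
  have epos: "e n > 0" for n using y by (simp add: e_def)
  have ele: "e n \<le> (L - y) / 2" for n
  proof -
    have "1 \<le> real (Suc n)" by simp
    then have "((L - y) / 2) / real (Suc n) \<le> ((L - y) / 2) / 1"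
      by (intro divide_left_mono) (use y in auto)
    then show ?thesis unfolding e_def by simp
  qed
  have elim: "e \<longlonglongrightarrow> 0"
    unfolding e_def using LIMSEQ_Suc[OF lim_const_over_n[of "(L - y) / 2"]] by simp
  define LH where "LH n = integral {-L..L} (\<lambda>t. u t * kern (e n) x t) - integral {-L..L} (\<lambda>t. u t * kern (e n) y t)" for n
  define RH where "RH n = (LINT t:{-L<..<L}|lborel. v t * phi x y (e n) t)" for n
  have eq: "LH n = - RH n" for n
  proof -
    have tf: "test_fun L (phi x y (e n))"
      by (rule phi_test[OF epos x xy]) (use ele[of n] y in simp)
    then have "(LINT t:{-L<..<L}|lborel. u t * deriv (phi x y (e n)) t) = - RH n"
      using wd unfolding weak_deriv_on_def RH_def by blast
    moreover have "(LINT t:{-L<..<L}|lborel. u t * deriv (phi x y (e n)) t)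
        = integral {-L..L} (\<lambda>t. u t * (kern (e n) x t - kern (e n) y t))"
    proof -
      have "(LINT t:{-L<..<L}|lborel. u t * deriv (phi x y (e n)) t)
          = (LINT t:{-L<..<L}|lborel. u t * (kern (e n) x t - kern (e n) y t))"
        by (simp add: deriv_phi[OF epos])
      also have "\<dots> = integral {-L..L} (\<lambda>t. u t * (kern (e n) x t - kern (e n) y t))"
        by (intro lint_cont continuous_intros cu kern_cont epos)
      finally show ?thesis .
    qed
    moreover have "integral {-L..L} (\<lambda>t. u t * (kern (e n) x t - kern (e n) y t)) = LH n"
    proof -
      have "integral {-L..L} (\<lambda>t. u t * (kern (e n) x t - kern (e n) y t))
          = integral {-L..L} (\<lambda>t. u t * kern (e n) x t - u t * kern (e n) y t)"
        by (simp add: algebra_simps)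
      also have "\<dots> = LH n" unfolding LH_def
        by (intro integral_diff integrable_continuous_real continuous_intros cu kern_cont epos)
      finally show ?thesis .
    qed
    ultimately show ?thesis by simp
  qed
  have xe: "x + e n \<le> L" for n using ele[of n] xy y by (simp add: field_simps)
  have ye: "y + e n \<le> L" for n using ele[of n] xy y by (simp add: field_simps)
  have l1: "LH \<longlonglongrightarrow> u x - u y"
    unfolding LH_def
  proof (intro tendsto_diff)
    show "(\<lambda>n. integral {-L..L} (\<lambda>t. u t * kern (e n) x t)) \<longlonglongrightarrow> u x"
      by (rule moll_lim[OF cu _ epos xe elim]) (use x in simp)
    show "(\<lambda>n. integral {-L..L} (\<lambda>t. u t * kern (e n) y t)) \<longlonglongrightarrow> u y"
      by (rule moll_lim[OF cu _ epos ye elim]) (use x xy in simp)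
  qed
  have "(\<lambda>n. - RH n) \<longlonglongrightarrow> - (LINT t:{-L<..<L}|lborel. v t * indicator {x<..y} t)"
    unfolding RH_def by (intro tendsto_minus dom_lim[OF vint elim epos xy])
  have l2: "LH \<longlonglongrightarrow> - (LINT t:{-L<..<L}|lborel. v t * indicator {x<..y} t)"
  proof -
    have "LH = (\<lambda>n. - RH n)" using eq by (intro ext) simp
    then show ?thesis using \<open>(\<lambda>n. - RH n) \<longlonglongrightarrow> _\<close> by simp
  qed
  have A: "u x - u y = - (LINT t:{-L<..<L}|lborel. v t * indicator {x<..y} t)"
    using LIMSEQ_unique[OF l1 l2] .
  have B: "(LINT t:{-L<..<L}|lborel. v t * indicator {x<..y} t) = (LINT t:{x..y}|lborel. v t)"
    unfolding set_lebesgue_integral_def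
  proof (rule integral_discrete_difference[where X="{x}"])
    fix t assume "t \<notin> {x}"
    then show "indicator {-L<..<L} t *\<^sub>R (v t * indicator {x<..y} t) = indicator {x..y} t *\<^sub>R v t"
      using x y xy by (auto simp: indicator_def)
  qed auto
  have C: "(LINT t:{x..y}|lborel. v t) = integral {x..y} v"
    using set_borel_integral_eq_integral(2)[OF vxy] .
  show "u y - u x = integral {x..y} v" using A B C by simp
qed


lemma int_pos:
  fixes f :: "real \<Rightarrow> real"
  assumes cd: "c < d" and fc: "continuous_on {c..d} f" and fp: "\<And>x. x \<in> {c..d} \<Longrightarrow> f x > 0"
  shows "integral {c..d} f > 0"
proof -
  obtain x0 where x0: "x0 \<in> {c..d}" and mn: "\<And>y. y \<in> {c..d} \<Longrightarrow> f x0 \<le> f y"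
    using continuous_attains_inf[OF compact_Icc _ fc] cd by fastforce
  have "integral {c..d} (\<lambda>_. f x0) \<le> integral {c..d} f"
    by (rule integral_le) (auto intro: integrable_continuous_real fc mn)
  moreover have "integral {c..d} (\<lambda>_. f x0) = (d - c) * f x0" using cd by simp
  moreover have "(d - c) * f x0 > 0" using cd fp[OF x0] by simp
  ultimately show ?thesis by linarith
qed

lemma cs_est:
  fixes v a :: "real \<Rightarrow> real"
  assumes cd: "c < d" and vi: "v integrable_on {c..d}"
    and vai: "(\<lambda>t. (v t)\<^sup>2 * a t) integrable_on {c..d}"
    and ac: "continuous_on {c..d} a" and ap: "\<And>t. a t > 0"
    and I: "\<bar>integral {c..d} v\<bar> = m0"
  shows "integral {c..d} (\<lambda>t. (v t)\<^sup>2 * a t) \<ge> m0\<^sup>2 / integral {c..d} (\<lambda>t. 1 / a t)"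
proof -
  define Q where "Q = integral {c..d} (\<lambda>t. 1 / a t)"
  define J where "J = integral {c..d} v"
  define k where "k = J / Q"
  have ic: "continuous_on {c..d} (\<lambda>t. 1 / a t)"
    using ac ap by (intro continuous_intros) (auto simp: less_imp_neq[symmetric])
  have Qp: "Q > 0" unfolding Q_def using int_pos[OF cd ic] ap by simp
  have ii: "(\<lambda>t. 1 / a t) integrable_on {c..d}" using ic by (rule integrable_continuous_real)
  have i1: "(\<lambda>t. 2 * k * v t) integrable_on {c..d}" using integrable_on_cmult_left[OF vi, of "2*k"] by simp
  have i2: "(\<lambda>t. k\<^sup>2 * (1 / a t)) integrable_on {c..d}" using integrable_on_cmult_left[OF ii, of "k\<^sup>2"] by simp
  have "integral {c..d} (\<lambda>t. 2 * k * v t - k\<^sup>2 * (1 / a t)) \<le> integral {c..d} (\<lambda>t. (v t)\<^sup>2 * a t)"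
  proof (rule integral_le)
    show "(\<lambda>t. 2 * k * v t - k\<^sup>2 * (1 / a t)) integrable_on {c..d}"
      using i1 i2 by (rule integrable_diff)
    show "(\<lambda>t. (v t)\<^sup>2 * a t) integrable_on {c..d}" by (rule vai)
    fix t
    have at: "a t > 0" by (rule ap)
    have "0 \<le> a t * (v t - k / a t)\<^sup>2" using at by simp
    also have "a t * (v t - k / a t)\<^sup>2 = (v t)\<^sup>2 * a t - (2 * k * v t - k\<^sup>2 * (1 / a t))"
      using at by (simp add: power2_eq_square field_simps)
    finally show "2 * k * v t - k\<^sup>2 * (1 / a t) \<le> (v t)\<^sup>2 * a t" by simp
  qed
  moreover have "integral {c..d} (\<lambda>t. 2 * k * v t - k\<^sup>2 * (1 / a t)) = 2 * k * J - k\<^sup>2 * Q"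
  proof -
    have "integral {c..d} (\<lambda>t. 2 * k * v t - k\<^sup>2 * (1 / a t))
        = integral {c..d} (\<lambda>t. 2 * k * v t) - integral {c..d} (\<lambda>t. k\<^sup>2 * (1 / a t))"
      using i1 i2 by (rule integral_diff)
    moreover have "integral {c..d} (\<lambda>t. k\<^sup>2 * (1 / a t)) = k\<^sup>2 * Q"
      unfolding Q_def by (rule integral_mult_right)
    moreover have "integral {c..d} (\<lambda>t. 2 * k * v t) = 2 * k * J"
      unfolding J_def by (rule integral_mult_right)
    ultimately show ?thesis by simp
  qed
  moreover have "2 * k * J - k\<^sup>2 * Q = m0\<^sup>2 / Q"
  proof -
    have "J\<^sup>2 = m0\<^sup>2" using I unfolding J_def by (metis power2_abs)
    then show ?thesis unfolding k_def using Qp by (simp add: power2_eq_square field_simps)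
  qed
  ultimately show ?thesis unfolding Q_def by simp
qed


lemma SI1:
  fixes v a :: "real \<Rightarrow> real"
  assumes vm: "set_borel_measurable lborel {-L<..<L} v"
    and v2: "set_integrable lborel {-L<..<L} (\<lambda>x. (v x)\<^sup>2)"
    and ac: "continuous_on UNIV a"
  shows "set_integrable lborel {-L..L} (\<lambda>x. (v x)\<^sup>2 * a x)"
proof -
  obtain K where K: "\<And>x. x \<in> {-L..L} \<Longrightarrow> \<bar>a x\<bar> \<le> K"
    using compact_imp_bounded[OF compact_continuous_image[OF continuous_on_subset[OF ac] compact_Icc]]
    unfolding bounded_iff by fastforce
  have vm': "(\<lambda>x. indicator {-L<..<L} x *\<^sub>R v x) \<in> borel_measurable lborel"
    using vm by (simp add: set_borel_measurable_def)
  have am: "a \<in> borel_measurable lborel"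
    using borel_measurable_continuous_onI[OF ac] by simp
  have "set_integrable lborel {-L<..<L} (\<lambda>x. (v x)\<^sup>2 * a x)"
    unfolding set_integrable_def
  proof (rule Bochner_Integration.integrable_bound[where f="\<lambda>x. K * (indicator {-L<..<L} x *\<^sub>R (v x)\<^sup>2)"])
    show "integrable lborel (\<lambda>x. K * (indicator {-L<..<L} x *\<^sub>R (v x)\<^sup>2))"
      using v2 unfolding set_integrable_def by (rule integrable_mult_right)
    have eq: "(\<lambda>x. indicator {-L<..<L} x *\<^sub>R ((v x)\<^sup>2 * a x)) = (\<lambda>x. (indicator {-L<..<L} x *\<^sub>R v x)\<^sup>2 * a x)"
      by (auto simp: indicator_def)
    show "(\<lambda>x. indicator {-L<..<L} x *\<^sub>R ((v x)\<^sup>2 * a x)) \<in> borel_measurable lborel"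
      unfolding eq using vm' am by measurable
    show "AE x in lborel. norm (indicator {-L<..<L} x *\<^sub>R ((v x)\<^sup>2 * a x)) \<le> norm (K * (indicator {-L<..<L} x *\<^sub>R (v x)\<^sup>2))"
    proof (rule AE_I2)
      fix x
      show "norm (indicator {-L<..<L} x *\<^sub>R ((v x)\<^sup>2 * a x)) \<le> norm (K * (indicator {-L<..<L} x *\<^sub>R (v x)\<^sup>2))"
      proof (cases "x \<in> {-L<..<L}")
        case True
        then have "\<bar>a x\<bar> \<le> K" using K by auto
        then have "(v x)\<^sup>2 * \<bar>a x\<bar> \<le> (v x)\<^sup>2 * K" by (intro mult_left_mono) auto
        moreover have "(v x)\<^sup>2 * K \<le> \<bar>K * (v x)\<^sup>2\<bar>" by (simp add: mult.commute)
        ultimately have "(v x)\<^sup>2 * \<bar>a x\<bar> \<le> \<bar>K * (v x)\<^sup>2\<bar>" by linarith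
        then show ?thesis using True by (simp add: abs_mult)
      qed simp
    qed
  qed
  moreover have "integrable lborel (\<lambda>x. indicator {-L<..<L} x *\<^sub>R ((v x)\<^sup>2 * a x)) \<longleftrightarrow>
      integrable lborel (\<lambda>x. indicator {-L..L} x *\<^sub>R ((v x)\<^sup>2 * a x))"
    by (rule integrable_discrete_difference[where X="{-L, L}"]) (auto simp: indicator_def)
  ultimately show ?thesis unfolding set_integrable_def by simp
qed

lemma half_est:
  fixes v a b u G :: "real \<Rightarrow> real"
  assumes cd: "c < d" and vi: "v integrable_on {c..d}"
    and vai: "(\<lambda>t. (v t)\<^sup>2 * a t) integrable_on {c..d}"
    and gi: "(\<lambda>t. G (u t) * b t) integrable_on {c..d}"
    and ac: "continuous_on UNIV a" and ap: "\<And>t. a t > 0"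
    and bc: "continuous_on UNIV b" and bp: "\<And>t. b t > 0"
    and I: "\<bar>integral {c..d} v\<bar> = m0"
    and G0: "\<And>t. t \<in> {c..d} \<Longrightarrow> G0 \<le> G (u t)"
  shows "integral {c..d} (\<lambda>x. (1/2) * (v x)\<^sup>2 * a x + G (u x) * b x)
     \<ge> (1/2) * (m0\<^sup>2 / integral {c..d} (\<lambda>t. 1 / a t)) + G0 * integral {c..d} b"
proof -
  have "integral {c..d} (\<lambda>x. (1/2) * (v x)\<^sup>2 * a x + G (u x) * b x)
      = integral {c..d} (\<lambda>x. (1/2) * ((v x)\<^sup>2 * a x)) + integral {c..d} (\<lambda>x. G (u x) * b x)"
    using integrable_on_cmult_left[OF vai, of "1/2"] gi by (subst integral_add[symmetric]) (auto simp: mult.assoc)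
  also have "integral {c..d} (\<lambda>x. (1/2) * ((v x)\<^sup>2 * a x)) = (1/2) * integral {c..d} (\<lambda>x. (v x)\<^sup>2 * a x)"
    by (rule integral_mult_right)
  finally have eq: "integral {c..d} (\<lambda>x. (1/2) * (v x)\<^sup>2 * a x + G (u x) * b x)
      = (1/2) * integral {c..d} (\<lambda>x. (v x)\<^sup>2 * a x) + integral {c..d} (\<lambda>x. G (u x) * b x)" .
  have e1: "integral {c..d} (\<lambda>x. (v x)\<^sup>2 * a x) \<ge> m0\<^sup>2 / integral {c..d} (\<lambda>t. 1 / a t)"
    by (rule cs_est[OF cd vi vai continuous_on_subset[OF ac] ap I]) simp
  have e2: "integral {c..d} (\<lambda>x. G0 * b x) \<le> integral {c..d} (\<lambda>x. G (u x) * b x)"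
  proof (rule integral_le)
    show "(\<lambda>x. G0 * b x) integrable_on {c..d}"
      by (intro integrable_continuous_real continuous_intros continuous_on_subset[OF bc]) simp
    show "(\<lambda>x. G (u x) * b x) integrable_on {c..d}" by (rule gi)
    fix x assume "x \<in> {c..d}"
    then show "G0 * b x \<le> G (u x) * b x" using G0 bp[of x] by (intro mult_right_mono) auto
  qed
  have "integral {c..d} (\<lambda>x. G0 * b x) = G0 * integral {c..d} b" by (rule integral_mult_right)
  with eq e1 e2 show ?thesis by simp
qed


theorem proposition5p7:
  fixes a b G :: "real \<Rightarrow> real" and M m :: real
  assumes a_cont: "continuous_on UNIV a" and a_even: "\<And>x. a (-x) = a x" and a_pos: "\<And>x. a x > 0"
      and b_cont: "continuous_on UNIV b" and b_even: "\<And>x. b (-x) = b x" and b_pos: "\<And>x. b x > 0"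
      and G_cont: "continuous_on UNIV G" and G_even: "\<And>s. G (-s) = G s"
      and M_pos: "M > 0" and G_M: "G M = 0" and G_ge: "\<And>s. G s \<ge> G M"
      and G_pos: "\<And>s. 0 \<le> s \<Longrightarrow> s < M \<Longrightarrow> G s > 0"
      and m_pos: "m > 0"
  shows "C_as a b G M m > 0 \<and>
         (\<forall>L u v. L > 0 \<longrightarrow> H1m_with_deriv m L u v \<longrightarrow> (\<forall>x\<in>{-L..L}. u (-x) = - u x) \<longrightarrow>
             energy a b G L u v \<ge> C_as a b G M m)"
proof -
  define m0 where "m0 = (1/2) * min m M"
  define G0 where "G0 = Inf (G ` {0<..<m0})"
  define A where "A t = integral {0..t} (\<lambda>x. 1 / a x)" for t
  define B where "B t = integral {0..t} b" for t
  define f where "f t = m0\<^sup>2 / A t + 2 * G0 * B t" for t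
  have Cdef: "C_as a b G M m = Inf (f ` {0<..})"
    unfolding C_as_def Let_def m0_def[symmetric] G0_def[symmetric] f_def A_def B_def by simp
  have m0p: "0 < m0" and m0M: "m0 < M" and m0m: "m0 < m"
    using m_pos M_pos unfolding m0_def by auto
  have Gnn: "G s \<ge> 0" for s using G_ge[of s] G_M by simp
  have bddG: "bdd_below (G ` {0<..<m0})" unfolding bdd_below_def using Gnn by blast
  have G0le: "G0 \<le> G s" if "\<bar>s\<bar> \<le> m0" for s
  proof -
    have "{0<..<m0} \<subseteq> {s. G0 \<le> G s}"
      unfolding G0_def using bddG by (auto intro: cInf_lower)
    moreover have "closed {s. G0 \<le> G s}" by (rule closed_Collect_le) (auto intro: G_cont)
    ultimately have "closure {0<..<m0} \<subseteq> {s. G0 \<le> G s}" by (rule closure_minimal)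
    then have "{0..m0} \<subseteq> {s. G0 \<le> G s}" using m0p by simp
    moreover have "\<bar>s\<bar> \<in> {0..m0}" using that by simp
    ultimately have "G0 \<le> G \<bar>s\<bar>" by blast
    moreover have "G \<bar>s\<bar> = G s" by (cases "s \<ge> 0") (simp_all add: G_even)
    ultimately show ?thesis by simp
  qed
  have G0pos: "G0 > 0"
  proof -
    have "\<exists>x\<in>{0..m0}. \<forall>y\<in>{0..m0}. G x \<le> G y"
      by (rule continuous_attains_inf[OF compact_Icc]) (use m0p continuous_on_subset[OF G_cont] in auto)
    then obtain x0 where x0: "x0 \<in> {0..m0}" and mn: "\<And>y. y \<in> {0..m0} \<Longrightarrow> G x0 \<le> G y"
      by blast
    have "G x0 > 0" using x0 m0M by (intro G_pos) auto
    moreover have "G x0 \<le> G0" unfolding G0_def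
    proof (rule cInf_greatest)
      show "G ` {0<..<m0} \<noteq> {}" using m0p by simp
      fix z assume "z \<in> G ` {0<..<m0}"
      then obtain y where "y \<in> {0<..<m0}" "z = G y" by blast
      then show "G x0 \<le> z" using mn[of y] by simp
    qed
    ultimately show ?thesis by simp
  qed
  have ia: "continuous_on S (\<lambda>x. 1 / a x)" for S
    using a_pos by (intro continuous_intros continuous_on_subset[OF a_cont]) (auto simp: less_imp_neq[symmetric])
  have ib: "continuous_on S b" for S using continuous_on_subset[OF b_cont] by auto
  have Apos: "A t > 0" if "t > 0" for t
    unfolding A_def using that by (intro int_pos ia) (auto simp: a_pos)
  have Bpos: "B t > 0" if "t > 0" for t
    unfolding B_def using that by (intro int_pos ib) (auto simp: b_pos)
  have Amono: "A t \<le> A t'" if "t \<le> t'" for t t'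
    unfolding A_def using that a_pos
    by (intro integral_subset_le integrable_continuous_real ia) (auto simp: less_imp_le)
  have Bmono: "B t \<le> B t'" if "t \<le> t'" for t t'
    unfolding B_def using that b_pos
    by (intro integral_subset_le integrable_continuous_real ib) (auto simp: less_imp_le)
  define c0 where "c0 = min (m0\<^sup>2 / A 1) (2 * G0 * B 1)"
  have c0p: "c0 > 0" unfolding c0_def using Apos[of 1] Bpos[of 1] m0p G0pos by simp
  have flow: "f t \<ge> c0" if "t > 0" for t
  proof (cases "t \<le> 1")
    case True
    have "m0\<^sup>2 / A 1 \<le> m0\<^sup>2 / A t"
      using Amono[OF True] Apos[OF that] by (intro divide_left_mono) auto
    moreover have "0 \<le> 2 * G0 * B t" using G0pos Bpos[OF that] by simp
    ultimately show ?thesis unfolding c0_def f_def by linarith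
  next
    case False
    have "2 * G0 * B 1 \<le> 2 * G0 * B t" using Bmono[of 1 t] False G0pos by simp
    moreover have "0 \<le> m0\<^sup>2 / A t" using Apos[OF that] by simp
    ultimately show ?thesis unfolding c0_def f_def by linarith
  qed
  have bddf: "bdd_below (f ` {0<..})" unfolding bdd_below_def using flow by blast
  have part1: "C_as a b G M m > 0"
  proof -
    have "c0 \<le> Inf (f ` {0<..})" by (rule cInf_greatest) (use flow in auto)
    then show ?thesis using c0p Cdef by simp
  qed
  have part2: "energy a b G L u v \<ge> C_as a b G M m"
    if Lp: "L > 0" and H: "H1m_with_deriv m L u v" and odd: "\<forall>x\<in>{-L..L}. u (-x) = - u x" for L u v
  proof -
    have cu: "continuous_on {-L..L} u" and vm: "set_borel_measurable lborel {-L<..<L} v"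
      and v2: "set_integrable lborel {-L<..<L} (\<lambda>x. (v x)\<^sup>2)" and wd: "weak_deriv_on L u v"
      and uL: "u L = m"
      using H by (auto simp: H1m_with_deriv_def H1_with_deriv_def)
    have "(0::real) \<in> {-L..L}" using Lp by simp
    then have "u (- 0) = - u 0" using odd by blast
    then have u0: "u 0 = 0" by simp
    have oddt: "u (-t) = - u t" if "t \<in> {-L..L}" for t using odd that by blast
    define T where "T = {0..L} \<inter> (\<lambda>t. \<bar>u t\<bar>) -` {m0..}"
    have cuL: "continuous_on {0..L} u" using continuous_on_subset[OF cu] by auto
    have Tclosed: "closed T" unfolding T_def
      by (rule continuous_closed_preimage) (auto intro: continuous_intros cuL)
    have LT: "L \<in> T" unfolding T_def using uL m0m Lp by auto
    have bddT: "bdd_below T" unfolding T_def bdd_below_def by auto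
    define \<beta> where "\<beta> = Inf T"
    have bT: "\<beta> \<in> T" unfolding \<beta>_def using closed_contains_Inf[OF _ bddT Tclosed] LT by blast
    then have b0: "0 \<le> \<beta>" and bL: "\<beta> \<le> L" and bm: "m0 \<le> \<bar>u \<beta>\<bar>" unfolding T_def by auto
    have below: "\<bar>u t\<bar> < m0" if "t \<in> {0..<\<beta>}" for t
    proof (rule ccontr)
      assume "\<not> \<bar>u t\<bar> < m0"
      then have "t \<in> T" using that bL unfolding T_def by auto
      then have "\<beta> \<le> t" unfolding \<beta>_def using bddT by (rule cInf_lower)
      then show False using that by simp
    qed
    have bpos: "\<beta> > 0"
    proof (rule ccontr)
      assume "\<not> \<beta> > 0"
      then have "\<beta> = 0" using b0 by simp
      then show False using bm u0 m0p by simp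
    qed
    have bm': "\<bar>u \<beta>\<bar> \<le> m0"
    proof -
      have cub: "continuous_on {0..\<beta>} u" using continuous_on_subset[OF cu] bL by auto
      have cl: "closed ({0..\<beta>} \<inter> (\<lambda>t. \<bar>u t\<bar>) -` {..m0})"
        by (rule continuous_closed_preimage) (auto intro: continuous_intros cub)
      have "{0..<\<beta>} \<subseteq> {0..\<beta>} \<inter> (\<lambda>t. \<bar>u t\<bar>) -` {..m0}"
        using below by (auto simp: less_imp_le)
      then have "closure {0..<\<beta>} \<subseteq> {0..\<beta>} \<inter> (\<lambda>t. \<bar>u t\<bar>) -` {..m0}"
        using cl by (rule closure_minimal)
      moreover have "\<beta> \<in> closure {0..<\<beta>}" using bpos by simp
      ultimately have "\<beta> \<in> {0..\<beta>} \<inter> (\<lambda>t. \<bar>u t\<bar>) -` {..m0}" by blast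
      then show ?thesis by simp
    qed
    have ub: "\<bar>u \<beta>\<bar> = m0" using bm bm' by simp
    have bL': "\<beta> < L"
    proof (rule ccontr)
      assume "\<not> \<beta> < L"
      then have "\<beta> = L" using bL by simp
      then show False using ub uL m0m m_pos by simp
    qed
    have bnd1: "\<bar>u t\<bar> \<le> m0" if "t \<in> {0..\<beta>}" for t
      using below[of t] that ub by (cases "t = \<beta>") auto
    have bnd2: "\<bar>u t\<bar> \<le> m0" if "t \<in> {-\<beta>..0}" for t
    proof -
      have "-t \<in> {-L..L}" using that bL by auto
      then have "u (- (-t)) = - u (-t)" by (rule oddt)
      then have "\<bar>u t\<bar> = \<bar>u (-t)\<bar>" by simp
      then show ?thesis using bnd1[of "-t"] that by simp
    qed
    have ftc1: "v integrable_on {0..\<beta>}" "u \<beta> - u 0 = integral {0..\<beta>} v"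
      using weak_ftc[OF cu wd _ bpos bL'] Lp by auto
    have ftc2: "v integrable_on {-\<beta>..0}" "u 0 - u (-\<beta>) = integral {-\<beta>..0} v"
      using weak_ftc[OF cu wd _ _ Lp, of "-\<beta>"] bpos bL' by auto
    have umb: "u (-\<beta>) = - u \<beta>" using oddt[of \<beta>] bL b0 by auto
    have I1: "\<bar>integral {0..\<beta>} v\<bar> = m0" using ftc1(2) u0 ub by simp
    have I2: "\<bar>integral {-\<beta>..0} v\<bar> = m0" using ftc2(2) u0 ub umb by simp
    have si1: "set_integrable lborel {-L..L} (\<lambda>x. (v x)\<^sup>2 * a x)" by (rule SI1[OF vm v2 a_cont])
    have cGub: "continuous_on {-L..L} (\<lambda>x. G (u x) * b x)"
      by (intro continuous_intros continuous_on_compose2[OF G_cont cu] continuous_on_subset[OF b_cont]) auto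
    have si2: "set_integrable lborel {-L..L} (\<lambda>x. G (u x) * b x)"
      unfolding set_integrable_def using borel_integrable_compact[OF compact_Icc cGub] .
    define F where "F x = (1/2) * (v x)\<^sup>2 * a x + G (u x) * b x" for x
    have eqF: "F = (\<lambda>x. (1/2) * ((v x)\<^sup>2 * a x) + G (u x) * b x)"
      unfolding F_def by (simp add: mult.assoc)
    have siF: "set_integrable lborel {-L..L} F"
      unfolding eqF by (intro set_integral_add(1) set_integrable_mult_right si1 si2)
    have E: "energy a b G L u v = integral {-L..L} F"
      unfolding energy_def F_def[symmetric] by (rule set_borel_integral_eq_integral(2)[OF siF])
    have Fi: "F integrable_on {-L..L}" by (rule set_borel_integral_eq_integral(1)[OF siF])
    have vai: "(\<lambda>x. (v x)\<^sup>2 * a x) integrable_on {-L..L}" by (rule set_borel_integral_eq_integral(1)[OF si1])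
    have gi: "(\<lambda>x. G (u x) * b x) integrable_on {-L..L}" by (rule set_borel_integral_eq_integral(1)[OF si2])
    have Fnn: "F x \<ge> 0" for x unfolding F_def using Gnn[of "u x"] a_pos[of x] b_pos[of x] by simp
    have sub: "{-\<beta>..\<beta>} \<subseteq> {-L..L}" using bL by auto
    have "integral {-\<beta>..\<beta>} F \<le> integral {-L..L} F"
      by (rule integral_subset_le[OF sub integrable_on_subinterval[OF Fi sub] Fi]) (simp add: Fnn)
    moreover have "integral {-\<beta>..0} F + integral {0..\<beta>} F = integral {-\<beta>..\<beta>} F"
      by (rule Henstock_Kurzweil_Integration.integral_combine) (use bpos integrable_on_subinterval[OF Fi sub] in auto)
    moreover have "integral {0..\<beta>} F \<ge> (1/2) * (m0\<^sup>2 / integral {0..\<beta>} (\<lambda>t. 1 / a t)) + G0 * integral {0..\<beta>} b"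
      unfolding F_def
    proof (rule half_est[OF bpos ftc1(1) _ _ a_cont a_pos b_cont b_pos I1])
      show "(\<lambda>t. (v t)\<^sup>2 * a t) integrable_on {0..\<beta>}" by (rule integrable_on_subinterval[OF vai]) (use bL in auto)
      show "(\<lambda>t. G (u t) * b t) integrable_on {0..\<beta>}" by (rule integrable_on_subinterval[OF gi]) (use bL in auto)
      fix t assume "t \<in> {0..\<beta>}" then show "G0 \<le> G (u t)" using G0le bnd1 by blast
    qed
    moreover have "integral {-\<beta>..0} F \<ge> (1/2) * (m0\<^sup>2 / integral {-\<beta>..0} (\<lambda>t. 1 / a t)) + G0 * integral {-\<beta>..0} b"
      unfolding F_def
    proof (rule half_est[OF _ ftc2(1) _ _ a_cont a_pos b_cont b_pos I2])
      show "-\<beta> < 0" using bpos by simp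
      show "(\<lambda>t. (v t)\<^sup>2 * a t) integrable_on {-\<beta>..0}" by (rule integrable_on_subinterval[OF vai]) (use bL in auto)
      show "(\<lambda>t. G (u t) * b t) integrable_on {-\<beta>..0}" by (rule integrable_on_subinterval[OF gi]) (use bL in auto)
      fix t assume "t \<in> {-\<beta>..0}" then show "G0 \<le> G (u t)" using G0le bnd2 by blast
    qed
    moreover have "integral {-\<beta>..0} (\<lambda>t. 1 / a t) = A \<beta>"
      using Henstock_Kurzweil_Integration.integral_reflect_real[of \<beta> 0 "\<lambda>t. 1 / a t"] unfolding A_def by (simp add: a_even)
    moreover have "integral {-\<beta>..0} b = B \<beta>"
      using Henstock_Kurzweil_Integration.integral_reflect_real[of \<beta> 0 b] unfolding B_def by (simp add: b_even)
    ultimately have "energy a b G L u v \<ge> f \<beta>"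
      unfolding E f_def A_def[symmetric] B_def[symmetric] by (simp add: field_simps)
    moreover have "f \<beta> \<ge> C_as a b G M m"
      unfolding Cdef by (rule cInf_lower) (use bpos bddf in auto)
    ultimately show ?thesis by linarith
  qed
  show ?thesis using part1 part2 by blast
qed

end
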